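(* Consider the Geo-Geo system with parameters $\mu_A,\mu_B\in(0,1)$. Its average AoI is $$\overline{\Delta}_{\text{Geo-Geo}}(\mu_A,\mu_B)=\frac{2\big(\mu_A^2+\mu_B^2+3\mu_A\mu_B-3\mu_A^2\mu_B-3\mu_A\mu_B^2+2\mu_A^2\mu_B^2\big)}{(\mu_A+\mu_B-\mu_A\mu_B)^3}.$$
   Context: **Time and sensors.** Time is slotted. Two sensors independently send time-stamped status updates about the same process to one monitor under the zero-wait policy: a new update is generated at the start of the slot right after the previous update of that sensor is delivered, with instantaneous acknowledgements. In the Geo-Geo system, sensor A completes its current update in each slot independently with probability $\mu_A$, and sensor B does so independently with probability $\mu_B$. Thus both sensors have i.i.d. geometric service times on $\{1,2,\dots\}$, with parameters $\mu_A$ and $\mu_B$. **AoI.** The monitor's AoI is $\Delta[t]=t-u(t)$, where $u(t)$ is the generation time of the freshest received update. It evolves by - $\Delta[t+1]=\Delta[t]+1$ if nothing is delivered in slot $t$; - $\Delta[t+1]=\min(t-G_i+1,\Delta[t]+1)$ otherwise, with $G_i$ the generation time of the delivered update. Equivalently, the system AoI is the minimum of the AoIs that each single sensor's update stream alone would produce. The average AoI is its long-run time average in steady state. *)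

theory Defs
  imports "HOL-Probability.Probability"
begin

text \<open>A sample path is a function
  w :: nat => bool * bool; fst (w t) (resp. snd (w t)) says that sensor A
  (resp. B) completes (delivers) its current update in slot t.\<close>

text \<open>Generation time of the update a sensor has in service during slot t
  (zero-wait: a fresh update replaces a delivered one immediately).
  Convention: the update delivered in slot t is replaced by one
  with time stamp t.\<close>
fun gen :: "(nat \<Rightarrow> bool) \<Rightarrow> nat \<Rightarrow> nat" where
  "gen c 0 = 0"
| "gen c (Suc t) = (if c t then t else gen c t)"

fun aoi :: "(nat \<Rightarrow> bool \<times> bool) \<Rightarrow> nat \<Rightarrow> nat" where
  "aoi w 0 = 0"
| "aoi w (Suc t) =
     (let d = aoi w t + 1;
          dA = (if fst (w t) then t - gen (\<lambda>s. fst (w s)) t + 1 else d);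
          dB = (if snd (w t) then t - gen (\<lambda>s. snd (w s)) t + 1 else d)
      in min d (min dA dB))"

definition slots_pmf :: "real \<Rightarrow> real \<Rightarrow> nat \<Rightarrow> (nat \<Rightarrow> bool \<times> bool) pmf" where
  "slots_pmf muA muB T =
     Pi_pmf {..<T} (False, False) (\<lambda>_. pair_pmf (bernoulli_pmf muA) (bernoulli_pmf muB))"

text \<open>E[Delta[t]] (Delta[t] only depends on slots 0..t-1).\<close>
definition expected_aoi :: "real \<Rightarrow> real \<Rightarrow> nat \<Rightarrow> real" where
  "expected_aoi muA muB t =
     measure_pmf.expectation (slots_pmf muA muB t) (\<lambda>w. real (aoi w t))"

definition avg_aoi_upto :: "real \<Rightarrow> real \<Rightarrow> nat \<Rightarrow> real" where
  "avg_aoi_upto muA muB T = (\<Sum>t<T. expected_aoi muA muB t) / real T"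

end

theory Submission
  imports Defs
begin

fun cnt :: "(nat \<Rightarrow> bool) \<Rightarrow> nat \<Rightarrow> nat \<Rightarrow> nat" where
  "cnt c m 0 = 0"
| "cnt c m (Suc k) = (if c m then 1 else 0) + cnt c (Suc m) k"

lemma cnt_Suc_top: "cnt c m (Suc k) = cnt c m k + (if c (m+k) then 1 else 0)"
  by (induction k arbitrary: m) auto

lemma cnt_cong: "(\<And>s. m \<le> s \<Longrightarrow> s < m+k \<Longrightarrow> c s = c' s) \<Longrightarrow> cnt c m k = cnt c' m k"
  by (induction k arbitrary: m) auto

fun ld :: "(nat \<Rightarrow> bool) \<Rightarrow> nat \<Rightarrow> nat" where
  "ld c 0 = 0"
| "ld c (Suc t) = (if c t then gen c t else ld c t)"

lemma gen_le: "gen c t \<le> t"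
  by (induction t) auto

lemma ld_le: "ld c t \<le> gen c t"
  by (induction t) (auto simp: gen_le)

lemma aoi_min: "aoi w t = min (t - ld (\<lambda>s. fst (w s)) t) (t - ld (\<lambda>s. snd (w s)) t)"
proof (induction t)
  case 0 then show ?case by simp
next
  case (Suc t)
  have a: "ld (\<lambda>s. fst (w s)) t \<le> gen (\<lambda>s. fst (w s)) t" "gen (\<lambda>s. fst (w s)) t \<le> t"
    "ld (\<lambda>s. snd (w s)) t \<le> gen (\<lambda>s. snd (w s)) t" "gen (\<lambda>s. snd (w s)) t \<le> t"
    by (rule ld_le gen_le)+
  show ?case using a Suc by (auto simp: Let_def min_def Suc_diff_le)
qed

lemma gen_char: "j < t - gen c t \<longleftrightarrow> j < t \<and> cnt c (t-j) j = 0"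
proof (induction t arbitrary: j)
  case 0 then show ?case by simp
next
  case (Suc t)
  show ?case
  proof (cases j)
    case 0 then show ?thesis using gen_le[of c t] by auto
  next
    case (Suc j')
    have e: "cnt c (t - j') (Suc j') = cnt c (t-j') j' + (if c t then 1 else 0)" if "j' < t"
      using that by (subst cnt_Suc_top) simp
    show ?thesis
    proof (cases "c t")
      case True then show ?thesis using Suc e by auto
    next
      case False then show ?thesis using Suc e Suc.IH[of j'] by auto
    qed
  qed
qed

lemma ld_char: "k < t - ld c t \<longleftrightarrow> k < t \<and> cnt c (t-k) k \<le> 1"
proof (induction t arbitrary: k)
  case 0 then show ?case by simp
next
  case (Suc t)
  show ?case
  proof (cases k)
    case 0 then show ?thesis using ld_le[of c t] gen_le[of c t] by auto
  next
    case (Suc j')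
    have e: "cnt c (t - j') (Suc j') = cnt c (t-j') j' + (if c t then 1 else 0)" if "j' < t"
      using that by (subst cnt_Suc_top) simp
    have "ld c (Suc t) \<le> t" using ld_le[of c t] gen_le[of c t] by auto
    hence l: "(k < Suc t - ld c (Suc t)) = (j' < t - ld c (Suc t))" using Suc by auto
    have r: "(k < Suc t \<and> cnt c (Suc t - k) k \<le> 1) = (j' < t \<and> cnt c (t - j') (Suc j') \<le> 1)"
      using Suc by simp
    show ?thesis
    proof (cases "c t")
      case True
      have "ld c (Suc t) = gen c t" using True by simp
      then show ?thesis unfolding l r using e gen_char[of j' t c] True by auto
    next
      case False
      have "ld c (Suc t) = ld c t" using False by simp
      then show ?thesis unfolding l r using e Suc.IH[of j'] False by auto
    qed
  qed
qed

lemma aoi_char: "k < aoi w t \<longleftrightarrow> k < t \<and> cnt (\<lambda>s. fst (w s)) (t-k) k \<le> 1 \<and> cnt (\<lambda>s. snd (w s)) (t-k) k \<le> 1"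
  unfolding aoi_min using ld_char[of k t] by auto

definition W :: "real \<Rightarrow> real \<Rightarrow> nat \<Rightarrow> real" where
  "W x0 x1 n = (if n = 0 then x0 else if n = 1 then x1 else 0)"

lemma aoi_sum: "real (aoi w t) = (\<Sum>k<t. W 1 1 (cnt (\<lambda>s. fst (w s)) (t-k) k) * W 1 1 (cnt (\<lambda>s. snd (w s)) (t-k) k))"
proof -
  have "{k. k < t \<and> cnt (\<lambda>s. fst (w s)) (t-k) k \<le> 1 \<and> cnt (\<lambda>s. snd (w s)) (t-k) k \<le> 1} = {..<aoi w t}"
    using aoi_char[of _ w t] by auto
  hence "aoi w t = card {k. k < t \<and> cnt (\<lambda>s. fst (w s)) (t-k) k \<le> 1 \<and> cnt (\<lambda>s. snd (w s)) (t-k) k \<le> 1}"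
    by simp
  also have "real \<dots> = (\<Sum>k<t. W 1 1 (cnt (\<lambda>s. fst (w s)) (t-k) k) * W 1 1 (cnt (\<lambda>s. snd (w s)) (t-k) k))"
  proof -
    have "{k. k < t \<and> cnt (\<lambda>s. fst (w s)) (t-k) k \<le> 1 \<and> cnt (\<lambda>s. snd (w s)) (t-k) k \<le> 1}
       = {k\<in>{..<t}. cnt (\<lambda>s. fst (w s)) (t-k) k \<le> 1 \<and> cnt (\<lambda>s. snd (w s)) (t-k) k \<le> 1}" by auto
    moreover have "\<And>n m. W 1 1 n * W 1 1 m = (if n \<le> 1 \<and> m \<le> 1 then 1 else 0)"
      by (auto simp: W_def)
    ultimately show ?thesis by (simp add: sum.If_cases Int_def)
  qed
  finally show ?thesis .
qed


lemma W_shift: "W x0 x1 ((if c then 1 else 0) + n) = W (if c then x1 else x0) (if c then 0 else x1) n"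
  by (auto simp: W_def)

lemma W_nonneg: "0 \<le> x0 \<Longrightarrow> 0 \<le> x1 \<Longrightarrow> 0 \<le> W x0 x1 n"
  by (auto simp: W_def)

lemma nn_bern:
  assumes "0 \<le> p" "p \<le> 1" "\<And>x. 0 \<le> f x"
  shows "(\<integral>\<^sup>+x. ennreal (f x) \<partial>bernoulli_pmf p) = ennreal (f True * p + f False * (1-p))"
  using assms by (simp add: ennreal_mult)

lemma nn_pair_bern:
  assumes "0 \<le> a" "a \<le> 1" "0 \<le> b" "b \<le> 1" "\<And>x y. 0 \<le> \<phi> x y"
  shows "(\<integral>\<^sup>+y. ennreal (\<phi> (fst y) (snd y)) \<partial>pair_pmf (bernoulli_pmf a) (bernoulli_pmf b))
    = ennreal (a*b*\<phi> True True + a*(1-b)*\<phi> True False + (1-a)*b*\<phi> False True + (1-a)*(1-b)*\<phi> False False)"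
proof -
  have "(\<integral>\<^sup>+y. ennreal (\<phi> (fst y) (snd y)) \<partial>pair_pmf (bernoulli_pmf a) (bernoulli_pmf b))
     = (\<integral>\<^sup>+x. \<integral>\<^sup>+y. ennreal (\<phi> x y) \<partial>bernoulli_pmf b \<partial>bernoulli_pmf a)"
    by (simp add: nn_integral_pair_pmf')
  also have "\<dots> = (\<integral>\<^sup>+x. ennreal (\<phi> x True * b + \<phi> x False * (1-b)) \<partial>bernoulli_pmf a)"
    using assms by (intro nn_integral_cong nn_bern) auto
  also have "\<dots> = ennreal ((\<phi> True True * b + \<phi> True False * (1-b)) * a + (\<phi> False True * b + \<phi> False False * (1-b)) * (1-a))"
    using assms by (intro nn_bern) (auto intro!: add_nonneg_nonneg mult_nonneg_nonneg)
  also have "\<dots> = ennreal (a*b*\<phi> True True + a*(1-b)*\<phi> True False + (1-a)*b*\<phi> False True + (1-a)*(1-b)*\<phi> False False)"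
    by (simp add: algebra_simps)
  finally show ?thesis .
qed

lemma ring4: "a*b*(X1*Y1) + a*(1-b)*(X1*Y0) + (1-a)*b*(X0*Y1) + (1-a)*(1-b)*(X0*Y0)
   = (a*X1 + (1-a)*X0)*(b*Y1+(1-b)*Y0)" for a b X0 X1 Y0 Y1 :: real
  by algebra

lemma key:
  fixes a b :: real
  assumes a: "0 < a" "a < 1" and b: "0 < b" "b < 1"
  shows "\<And>x0 x1 y0 y1 m. 0 \<le> x0 \<Longrightarrow> 0 \<le> x1 \<Longrightarrow> 0 \<le> y0 \<Longrightarrow> 0 \<le> y1 \<Longrightarrow>
    (\<integral>\<^sup>+w. ennreal (W x0 x1 (cnt (\<lambda>s. fst (w s)) m k) * W y0 y1 (cnt (\<lambda>s. snd (w s)) m k))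
       \<partial>Pi_pmf {m..<m+k} (False,False) (\<lambda>_. pair_pmf (bernoulli_pmf a) (bernoulli_pmf b)))
   = ennreal ((x0*(1-a)^k + x1*(real k*(a/(1-a))*(1-a)^k)) * (y0*(1-b)^k + y1*(real k*(b/(1-b))*(1-b)^k)))"
proof (induction k)
  case 0
  then show ?case by (simp add: W_def)
next
  case (Suc k)
  let ?P = "(\<lambda>_::nat. pair_pmf (bernoulli_pmf a) (bernoulli_pmf b))"
  let ?RA = "\<lambda>x0 x1. x0*(1-a)^k + x1*(real k*(a/(1-a))*(1-a)^k)"
  let ?RB = "\<lambda>y0 y1. y0*(1-b)^k + y1*(real k*(b/(1-b))*(1-b)^k)"
  have I: "{m..<m+Suc k} = insert m {Suc m..<Suc m+k}" by auto
  have inner: "(\<integral>\<^sup>+g. ennreal (W x0 x1 (cnt (\<lambda>s. fst ((g(m:=y)) s)) m (Suc k)) * W y0 y1 (cnt (\<lambda>s. snd ((g(m:=y)) s)) m (Suc k)))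
       \<partial>Pi_pmf {Suc m..<Suc m+k} (False,False) ?P)
    = ennreal (?RA (if fst y then x1 else x0) (if fst y then 0 else x1) * ?RB (if snd y then y1 else y0) (if snd y then 0 else y1))" for y
  proof -
    have cA: "cnt (\<lambda>s. fst ((g(m:=y)) s)) m (Suc k) = (if fst y then 1 else 0) + cnt (\<lambda>s. fst (g s)) (Suc m) k" for g
      by (simp, rule cnt_cong, auto)
    have cB: "cnt (\<lambda>s. snd ((g(m:=y)) s)) m (Suc k) = (if snd y then 1 else 0) + cnt (\<lambda>s. snd (g s)) (Suc m) k" for g
      by (simp, rule cnt_cong, auto)
    show ?thesis unfolding cA cB W_shift
      by (rule Suc.IH) (use Suc.prems in auto)
  qed
  have "(\<integral>\<^sup>+w. ennreal (W x0 x1 (cnt (\<lambda>s. fst (w s)) m (Suc k)) * W y0 y1 (cnt (\<lambda>s. snd (w s)) m (Suc k)))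
       \<partial>Pi_pmf {m..<m+Suc k} (False,False) ?P)
     = (\<integral>\<^sup>+y. \<integral>\<^sup>+g. ennreal (W x0 x1 (cnt (\<lambda>s. fst ((g(m:=y)) s)) m (Suc k)) * W y0 y1 (cnt (\<lambda>s. snd ((g(m:=y)) s)) m (Suc k)))
       \<partial>Pi_pmf {Suc m..<Suc m+k} (False,False) ?P \<partial>?P m)"
    unfolding I by (subst Pi_pmf_insert) (auto simp: nn_integral_pair_pmf' case_prod_beta)
  also have "\<dots> = (\<integral>\<^sup>+y. ennreal (?RA (if fst y then x1 else x0) (if fst y then 0 else x1) * ?RB (if snd y then y1 else y0) (if snd y then 0 else y1)) \<partial>?P m)"
    by (simp only: inner)
  also have "\<dots> = ennreal (a*b*(?RA x1 0 * ?RB y1 0) + a*(1-b)*(?RA x1 0 * ?RB y0 y1) + (1-a)*b*(?RA x0 x1 * ?RB y1 0) + (1-a)*(1-b)*(?RA x0 x1 * ?RB y0 y1))"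
    using a b Suc.prems
    by (subst nn_pair_bern[where \<phi>="\<lambda>u v. ?RA (if u then x1 else x0) (if u then 0 else x1) * ?RB (if v then y1 else y0) (if v then 0 else y1)"])
       (auto intro!: mult_nonneg_nonneg add_nonneg_nonneg)
  also have "\<dots> = ennreal ((a*?RA x1 0 + (1-a)*?RA x0 x1) * (b*?RB y1 0 + (1-b)*?RB y0 y1))"
    by (intro arg_cong[where f=ennreal] ring4)
  also have "a*?RA x1 0 + (1-a)*?RA x0 x1 = x0*(1-a)^Suc k + x1*(real (Suc k)*(a/(1-a))*(1-a)^Suc k)"
  proof -
    have e: "a/(1-a)*(1-a)^Suc k = a*(1-a)^k" using a by (simp add: power_Suc field_simps)
    have "x1*(real (Suc k)*(a/(1-a))*(1-a)^Suc k) = x1*(real (Suc k)*(a/(1-a)*(1-a)^Suc k))" by simp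
    also have "\<dots> = x1*(real (Suc k)*(a*(1-a)^k))" by (simp only: e)
    finally have 1: "x1*(real (Suc k)*(a/(1-a))*(1-a)^Suc k) = x1*(real (Suc k)*(a*(1-a)^k))" .
    have 2: "(1-a)*(x1*(real k*(a/(1-a))*(1-a)^k)) = x1*real k*(a*(1-a)^k)" using a by (simp add: field_simps)
    show ?thesis unfolding 1 using 2 by (simp add: algebra_simps)
  qed
  also have "b*?RB y1 0 + (1-b)*?RB y0 y1 = y0*(1-b)^Suc k + y1*(real (Suc k)*(b/(1-b))*(1-b)^Suc k)"
  proof -
    have e: "b/(1-b)*(1-b)^Suc k = b*(1-b)^k" using b by (simp add: power_Suc field_simps)
    have "y1*(real (Suc k)*(b/(1-b))*(1-b)^Suc k) = y1*(real (Suc k)*(b/(1-b)*(1-b)^Suc k))" by simp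
    also have "\<dots> = y1*(real (Suc k)*(b*(1-b)^k))" by (simp only: e)
    finally have 1: "y1*(real (Suc k)*(b/(1-b))*(1-b)^Suc k) = y1*(real (Suc k)*(b*(1-b)^k))" .
    have 2: "(1-b)*(y1*(real k*(b/(1-b))*(1-b)^k)) = y1*real k*(b*(1-b)^k)" using b by (simp add: field_simps)
    show ?thesis unfolding 1 using 2 by (simp add: algebra_simps)
  qed
  finally show ?case .
qed

definition hh :: "real \<Rightarrow> real \<Rightarrow> nat \<Rightarrow> real" where
  "hh a b k = ((1-a)^k + real k*(a/(1-a))*(1-a)^k) * ((1-b)^k + real k*(b/(1-b))*(1-b)^k)"

lemma exp_window:
  fixes a b :: real
  assumes a: "0 < a" "a < 1" and b: "0 < b" "b < 1" and k: "k < t"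
  shows "measure_pmf.expectation (slots_pmf a b t)
     (\<lambda>w. W 1 1 (cnt (\<lambda>s. fst (w s)) (t-k) k) * W 1 1 (cnt (\<lambda>s. snd (w s)) (t-k) k)) = hh a b k"
proof -
  let ?P = "(\<lambda>_::nat. pair_pmf (bernoulli_pmf a) (bernoulli_pmf b))"
  define F where "F = (\<lambda>w::nat \<Rightarrow> bool \<times> bool. W 1 1 (cnt (\<lambda>s. fst (w s)) (t-k) k) * W 1 1 (cnt (\<lambda>s. snd (w s)) (t-k) k))"
  have sub: "Pi_pmf {t-k..<t} (False,False) ?P = map_pmf (\<lambda>f x. if x \<in> {t-k..<t} then f x else (False,False)) (Pi_pmf {..<t} (False,False) ?P)"
    by (rule Pi_pmf_subset) auto
  have Fr: "F (\<lambda>x. if x \<in> {t-k..<t} then f x else (False,False)) = F f" for f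
  proof -
    have "cnt (\<lambda>s. fst (if s \<in> {t-k..<t} then f s else (False,False))) (t-k) k = cnt (\<lambda>s. fst (f s)) (t-k) k"
      by (rule cnt_cong) (use k in auto)
    moreover have "cnt (\<lambda>s. snd (if s \<in> {t-k..<t} then f s else (False,False))) (t-k) k = cnt (\<lambda>s. snd (f s)) (t-k) k"
      by (rule cnt_cong) (use k in auto)
    ultimately show ?thesis unfolding F_def by simp
  qed
  have 1: "measure_pmf.expectation (slots_pmf a b t) F = measure_pmf.expectation (Pi_pmf {t-k..<t} (False,False) ?P) F"
    unfolding sub slots_pmf_def by (simp only: integral_map_pmf Fr)
  have Fnn: "0 \<le> F w" for w unfolding F_def by (intro mult_nonneg_nonneg W_nonneg) auto
  have Fb: "norm (F w) \<le> 1" for w unfolding F_def by (auto simp: W_def)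
  have int: "integrable (measure_pmf (Pi_pmf {t-k..<t} (False,False) ?P)) F"
    by (rule measure_pmf.integrable_const_bound[where B=1]) (use Fb in auto)
  have "ennreal (measure_pmf.expectation (Pi_pmf {t-k..<t} (False,False) ?P) F)
      = (\<integral>\<^sup>+w. ennreal (F w) \<partial>Pi_pmf {t-k..<t} (False,False) ?P)"
    by (rule nn_integral_eq_integral[symmetric]) (use int Fnn in auto)
  also have "(\<integral>\<^sup>+w. ennreal (F w) \<partial>Pi_pmf {t-k..<t} (False,False) ?P) = ennreal (hh a b k)"
  proof -
    have st: "{t-k..<t} = {t-k..<(t-k)+k}" using k by auto
    show ?thesis unfolding F_def hh_def st using key[OF a b, of 1 1 1 1 "t-k" k] by simp
  qed
  finally have "ennreal (measure_pmf.expectation (Pi_pmf {t-k..<t} (False,False) ?P) F) = ennreal (hh a b k)" .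
  moreover have "0 \<le> hh a b k" using a b unfolding hh_def by (intro mult_nonneg_nonneg add_nonneg_nonneg) auto
  moreover have "0 \<le> measure_pmf.expectation (Pi_pmf {t-k..<t} (False,False) ?P) F"
    using Fnn by (simp add: integral_nonneg_AE)
  ultimately have "measure_pmf.expectation (Pi_pmf {t-k..<t} (False,False) ?P) F = hh a b k" by simp
  then show ?thesis using 1 unfolding F_def by simp
qed

lemma expected_eq:
  fixes a b :: real
  assumes a: "0 < a" "a < 1" and b: "0 < b" "b < 1"
  shows "expected_aoi a b t = (\<Sum>k<t. hh a b k)"
proof -
  have "expected_aoi a b t = measure_pmf.expectation (slots_pmf a b t)
     (\<lambda>w. \<Sum>k<t. W 1 1 (cnt (\<lambda>s. fst (w s)) (t-k) k) * W 1 1 (cnt (\<lambda>s. snd (w s)) (t-k) k))"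
    unfolding expected_aoi_def by (simp only: aoi_sum)
  also have "\<dots> = (\<Sum>k<t. measure_pmf.expectation (slots_pmf a b t)
     (\<lambda>w. W 1 1 (cnt (\<lambda>s. fst (w s)) (t-k) k) * W 1 1 (cnt (\<lambda>s. snd (w s)) (t-k) k)))"
    by (rule Bochner_Integration.integral_sum)
       (rule measure_pmf.integrable_const_bound[where B=1], auto simp: W_def)
  also have "\<dots> = (\<Sum>k<t. hh a b k)"
    by (rule sum.cong) (use exp_window[OF a b] in auto)
  finally show ?thesis .
qed

lemma deriv_aux: fixes z :: real assumes "z \<noteq> 1"
  shows "((\<lambda>z. 1 / (1 - z)^2) has_field_derivative 2 / (1 - z)^3) (at z)"
proof -
  have w: "1 - z \<noteq> 0" using assms by simp
  have u: "u \<noteq> 0 \<Longrightarrow> - ((of_nat 2 * u^(2-1) * (-1)) * inverse ((u^2)^Suc (Suc 0))) = 2 / u^3" for u :: real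
    by (simp add: field_simps eval_nat_numeral)
  have d: "((\<lambda>z. (1 - z)^2) has_field_derivative (of_nat 2 * (1-z)^(2-1) * (-1))) (at z)"
    by (auto intro!: derivative_eq_intros)
  have "((\<lambda>z. inverse ((1 - z)^2)) has_field_derivative - ((of_nat 2 * (1-z)^(2-1) * (-1)) * inverse (((1-z)^2)^Suc (Suc 0)))) (at z)"
    by (rule DERIV_inverse_fun[OF d]) (use w in simp)
  then show ?thesis using u[OF w] by (simp add: divide_inverse)
qed

lemma S2:
  fixes z :: real
  assumes "norm z < 1"
  shows "(\<lambda>n. of_nat (Suc n) * of_nat (Suc (Suc n)) * z^n) sums (2 / (1 - z)^3)"
proof -
  have "(\<lambda>n. diffs (\<lambda>n. of_nat (Suc n)) n * z^n) sums (2 / (1 - z)^3)"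
  proof (rule termdiffs_sums_strong[where K=1 and f="\<lambda>z. 1 / (1 - z)^2"])
    fix z :: real assume "norm z < 1"
    thus "(\<lambda>n. of_nat (Suc n) * z^n) sums (1 / (1 - z)^2)" by (rule geometric_deriv_sums)
  next
    have "z \<noteq> 1" using assms by auto
    then show "((\<lambda>z. 1 / (1 - z)^2) has_field_derivative 2 / (1 - z)^3) (at z)"
      by (rule deriv_aux)
  qed (use assms in auto)
  thus ?thesis unfolding diffs_def by (simp add: mult_ac)
qed

lemma S3_summable:
  fixes z :: real
  assumes "norm z < 1"
  shows "summable (\<lambda>n. of_nat (Suc n) * of_nat (Suc (Suc n)) * of_nat (Suc (Suc (Suc n))) * z^n)"
proof -
  have "summable (\<lambda>n. diffs (\<lambda>n. of_nat (Suc n) * of_nat (Suc (Suc n)) :: real) n * z^n)"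
    by (rule termdiff_converges[where K=1]) (use assms S2 sums_summable in auto)
  thus ?thesis unfolding diffs_def by (simp add: mult_ac)
qed

lemma h_sums:
  fixes a b :: real
  assumes a: "0 < a" "a < 1" and b: "0 < b" "b < 1"
  shows "hh a b sums (2 * (a^2 + b^2 + 3*a*b - 3*a^2*b - 3*a*b^2 + 2*a^2*b^2) / (a + b - a*b)^3)"
proof -
  define r where "r = (1-a)*(1-b)"
  define al where "al = a/(1-a)"
  define be where "be = b/(1-b)"
  have r0: "0 < r" "r < 1" unfolding r_def using a b by (auto intro: mult_pos_pos) (smt (verit) mult_less_cancel_right2)
  hence nr: "norm r < 1" by simp
  have e: "hh a b = (\<lambda>n. (1-(al+be)+al*be) * r^n + ((al+be) - 3*al*be) * (of_nat (Suc n) * r^n)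
        + al*be * (of_nat (Suc n) * of_nat (Suc (Suc n)) * r^n))"
  proof
    fix n
    have rn: "r^n = (1-a)^n * (1-b)^n" unfolding r_def by (simp add: power_mult_distrib)
    have "hh a b n = ((1-a)^n + real n*al*(1-a)^n) * ((1-b)^n + real n*be*(1-b)^n)"
      unfolding hh_def al_def be_def by simp
    hence "hh a b n = r^n * (1 + real n * al) * (1 + real n * be)"
      unfolding rn by (simp add: algebra_simps)
    also have "\<dots> = (1-(al+be)+al*be) * r^n + ((al+be) - 3*al*be) * (of_nat (Suc n) * r^n)
        + al*be * (of_nat (Suc n) * of_nat (Suc (Suc n)) * r^n)"
      by (simp add: algebra_simps)
    finally show "hh a b n = \<dots>" .
  qed
  have "hh a b sums ((1-(al+be)+al*be) * (1/(1-r)) + ((al+be) - 3*al*be) * (1/(1-r)^2) + al*be * (2/(1-r)^3))"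
    unfolding e
    by (intro sums_add sums_mult geometric_sums geometric_deriv_sums S2 nr)
  also have "(1-(al+be)+al*be) * (1/(1-r)) + ((al+be) - 3*al*be) * (1/(1-r)^2) + al*be * (2/(1-r)^3)
      = 2 * (a^2 + b^2 + 3*a*b - 3*a^2*b - 3*a*b^2 + 2*a^2*b^2) / (a + b - a*b)^3"
  proof -
    have d0: "1 - r = a + b - a*b" unfolding r_def by (simp add: algebra_simps)
    define A where "A = 1 - a"
    define B where "B = 1 - b"
    define d where "d = a + b - a*b"
    define N where "N = a^2 + b^2 + 3*a*b - 3*a^2*b - 3*a*b^2 + 2*a^2*b^2"
    have nz: "d \<noteq> 0" using r0 d0 unfolding d_def by auto
    have A0: "A \<noteq> 0" "B \<noteq> 0" using a b unfolding A_def B_def by auto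
    have pol: "(A-a)*(B-b)*d^2 + (a*B+b*A-3*a*b)*d + 2*a*b = 2*N*(A*B)"
      unfolding A_def B_def d_def N_def by algebra
    have "(1-(al+be)+al*be) * (1/d) + ((al+be) - 3*al*be) * (1/d^2) + al*be * (2/d^3)
       = ((A-a)*(B-b)*d^2 + (a*B+b*A-3*a*b)*d + 2*a*b) / (A*B*d^3)"
      unfolding al_def be_def A_def[symmetric] B_def[symmetric] using nz A0
      by (simp add: field_simps power2_eq_square power3_eq_cube)
    also have "\<dots> = 2*N/d^3" unfolding pol using nz A0 by (simp add: field_simps)
    finally show ?thesis unfolding d0 d_def[symmetric] N_def[symmetric] .
  qed
  finally show ?thesis .
qed

lemma hk_summable:
  fixes a b :: real
  assumes a: "0 < a" "a < 1" and b: "0 < b" "b < 1"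
  shows "summable (\<lambda>k. real (Suc k) * hh a b k)"
proof -
  define r where "r = (1-a)*(1-b)"
  define al where "al = a/(1-a)"
  define be where "be = b/(1-b)"
  have r0: "0 < r" "r < 1" unfolding r_def using a b by (auto intro: mult_pos_pos) (smt (verit) mult_less_cancel_right2)
  hence nr: "norm r < 1" by simp
  define ss where "ss = al + be"
  define pp where "pp = al * be"
  have e: "(\<lambda>k. real (Suc k) * hh a b k) = (\<lambda>n. (1 - 2 * ss + 4 * pp) * (of_nat (Suc n) * r^n) + (ss - 5 * pp) * (of_nat (Suc n) * of_nat (Suc (Suc n)) * r^n)
        + pp * (of_nat (Suc n) * of_nat (Suc (Suc n)) * of_nat (Suc (Suc (Suc n))) * r^n))"
  proof
    fix n
    have rn: "r^n = (1-a)^n * (1-b)^n" unfolding r_def by (simp add: power_mult_distrib)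
    have "hh a b n = ((1-a)^n + real n*al*(1-a)^n) * ((1-b)^n + real n*be*(1-b)^n)"
      unfolding hh_def al_def be_def by simp
    hence "real (Suc n) * hh a b n = r^n * (real (Suc n) * (1 + real n * al) * (1 + real n * be))"
      unfolding rn by (simp add: algebra_simps)
    also have "\<dots> = (1 - 2 * ss + 4 * pp) * (of_nat (Suc n) * r^n) + (ss - 5 * pp) * (of_nat (Suc n) * of_nat (Suc (Suc n)) * r^n)
        + pp * (of_nat (Suc n) * of_nat (Suc (Suc n)) * of_nat (Suc (Suc (Suc n))) * r^n)"
      unfolding ss_def pp_def by (simp add: algebra_simps)
    finally show "real (Suc n) * hh a b n = \<dots>" .
  qed
  show ?thesis unfolding e
    by (intro summable_add summable_mult sums_summable[OF geometric_deriv_sums] sums_summable[OF S2] S3_summable nr)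
qed

lemma double_sum: "(\<Sum>t<T. \<Sum>k<t. f k) = real T * (\<Sum>k<T. f k) - (\<Sum>k<T. real (Suc k) * (f k :: real))"
  by (induction T) (auto simp: algebra_simps)

theorem lemma2:
  fixes muA muB :: real
  assumes "0 < muA" "muA < 1" "0 < muB" "muB < 1"
  shows "avg_aoi_upto muA muB \<longlonglongrightarrow>
    2 * (muA^2 + muB^2 + 3*muA*muB - 3*muA^2*muB - 3*muA*muB^2 + 2*muA^2*muB^2)
      / (muA + muB - muA*muB)^3"
proof -
  let ?L = "2 * (muA^2 + muB^2 + 3*muA*muB - 3*muA^2*muB - 3*muA*muB^2 + 2*muA^2*muB^2)
      / (muA + muB - muA*muB)^3"
  define H where "H = (\<lambda>T. \<Sum>k<T. hh muA muB k)"
  define U where "U = (\<lambda>T. \<Sum>k<T. real (Suc k) * hh muA muB k)"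
  have HL: "H \<longlonglongrightarrow> ?L" using h_sums[OF assms] unfolding H_def sums_def .
  have UL: "U \<longlonglongrightarrow> suminf (\<lambda>k. real (Suc k) * hh muA muB k)"
    unfolding U_def by (rule summable_LIMSEQ[OF hk_summable[OF assms]])
  have U0: "(\<lambda>T. U T * inverse (real T)) \<longlonglongrightarrow> suminf (\<lambda>k. real (Suc k) * hh muA muB k) * 0"
    by (intro tendsto_mult UL lim_inverse_n)
  have lim: "(\<lambda>T. H T - U T * inverse (real T)) \<longlonglongrightarrow> ?L"
    using tendsto_diff[OF HL U0] by simp
  show ?thesis
  proof (rule Lim_transform_eventually[OF lim])
    show "\<forall>\<^sub>F T in sequentially. H T - U T * inverse (real T) = avg_aoi_upto muA muB T"
      using eventually_gt_at_top[of "0::nat"]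
    proof eventually_elim
      case (elim T)
      have "avg_aoi_upto muA muB T = (\<Sum>t<T. \<Sum>k<t. hh muA muB k) / real T"
        unfolding avg_aoi_upto_def by (simp add: expected_eq[OF assms])
      also have "\<dots> = (real T * H T - U T) / real T"
        unfolding H_def U_def by (simp only: double_sum)
      also have "\<dots> = H T - U T * inverse (real T)"
        using elim by (simp add: field_simps)
      finally show ?case by simp
    qed
  qed
qed

end
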